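(* Let $I\subseteq R$ be a good ideal. Then there exist finitely many pairwise disjoint cones in $\mathbb N^n$ whose union is $\mathbb N^n$ such that for each of these cones $C$ and all $a,b\in C$ one has $I_a=I_b$.
   Context: Let $\mathbb K$ be a field, $R=\mathbb K[x_1,\dots,x_n]$, $\mathfrak m=\langle x_1,\dots,x_n\rangle$, $\mathbb N=\{0,1,2,\dots\}$. A monomial $x_1^{\alpha_1}\cdots x_n^{\alpha_n}$ is identified with the point $(\alpha_1,\dots,\alpha_n)\in\mathbb N^n$. For a monomial ideal $I$, $G(I)$ denotes its (unique) minimal monomial generating set. If $I$ is an $\mathfrak m$-primary monomial ideal, then for each $i$ there is a unique $d_i\ge1$ with $x_i^{d_i}\in G(I)$; write $\mu_i=x_i^{d_i}$. For $(a_1,\dots,a_n)\in\mathbb N^n$ the box associated to $I$ is $B_{a_1,\dots,a_n}=([a_1d_1,(a_1+1)d_1]\times\cdots\times[a_nd_n,(a_n+1)d_n])\cap\mathbb N^n$; a monomial belongs to a box if its exponent vector does. An $\mathfrak m$-primary monomial ideal $I$ is called good if for every integer $l\ge1$, every element of $G(I^l)$ belongs to some box $B_{a_1,\dots,a_n}$ with $a_1+\dots+a_n=l-1$. For a good ideal $I$ and $a=(a_1,\dots,a_n)\in\mathbb N^n$, with $l=a_1+\dots+a_n+1$, define $I_{a}=I_{a_1,\dots,a_n}=\left\langle \frac{m}{\mu_1^{a_1}\cdots\mu_n^{a_n}} : m\in B_{a_1,\dots,a_n}\cap G(I^l)\right\rangle$. For $v\in\mathbb N^n$ and $S\subseteq\{1,\dots,n\}$,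 the cone with vertex $v$ and set of fixed coordinates $S$ is $\{c\in\mathbb N^n : c_i=v_i \text{ for } i\in S,\ c_i\ge v_i \text{ for } i\notin S\}$; its dimension is $n-|S|$. *)

theory Defs
  imports Main
begin

text \<open>Monomials of R = K[x_i : i in 'n] are identified with exponent vectors
  'n => nat (the variables are indexed by a finite type 'n, so n = CARD('n)).
  A monomial ideal is identified with the set of exponent vectors of the
  monomials it contains; this set is closed upwards in the componentwise order.\<close>

type_synonym 'n expv = "'n \<Rightarrow> nat"

definition monomial_ideal :: "'n expv set \<Rightarrow> bool" where
  "monomial_ideal I \<longleftrightarrow> (\<forall>a\<in>I. \<forall>b. a \<le> b \<longrightarrow> b \<in> I)"

definition mgen :: "'n expv set \<Rightarrow> 'n expv set" where
  "mgen S = {b. \<exists>a\<in>S. a \<le> b}"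

definition mingens :: "'n expv set \<Rightarrow> 'n expv set" where
  "mingens I = {a\<in>I. \<forall>b\<in>I. b \<le> a \<longrightarrow> b = a}"

definition mprod :: "'n expv set \<Rightarrow> 'n expv set \<Rightarrow> 'n expv set" where
  "mprod I J = mgen {(\<lambda>i. a i + b i) | a b. a \<in> I \<and> b \<in> J}"

fun mpow :: "'n expv set \<Rightarrow> nat \<Rightarrow> 'n expv set" where
  "mpow I 0 = UNIV"
| "mpow I (Suc l) = mprod I (mpow I l)"

definition xpow :: "'n \<Rightarrow> nat \<Rightarrow> 'n expv" where
  "xpow i d = (\<lambda>j. if j = i then d else 0)"

definition m_primary :: "'n expv set \<Rightarrow> bool" where
  "m_primary I \<longleftrightarrow> monomial_ideal I \<and> I \<noteq> UNIV \<and> (\<forall>i. \<exists>d. xpow i d \<in> I)"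

definition dexp :: "'n expv set \<Rightarrow> 'n \<Rightarrow> nat" where
  "dexp I i = (THE d. xpow i d \<in> mingens I)"

definition box :: "'n expv set \<Rightarrow> 'n expv \<Rightarrow> 'n expv set" where
  "box I a = {c. \<forall>i. a i * dexp I i \<le> c i \<and> c i \<le> (a i + 1) * dexp I i}"

definition good_ideal :: "('n::finite) expv set \<Rightarrow> bool" where
  "good_ideal I \<longleftrightarrow> m_primary I \<and>
     (\<forall>l\<ge>1. \<forall>m\<in>mingens (mpow I l). \<exists>a. (\<Sum>i\<in>UNIV. a i) = l - 1 \<and> m \<in> box I a)"

text \<open>I_a, generated by m / (mu_1^{a_1} ... mu_n^{a_n}) for m in B_a \<inter> G(I^l), l = |a| + 1.\<close>
definition I_idx :: "('n::finite) expv set \<Rightarrow> 'n expv \<Rightarrow> 'n expv set" where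
  "I_idx I a = mgen {(\<lambda>i. m i - a i * dexp I i) | m.
       m \<in> box I a \<inter> mingens (mpow I ((\<Sum>i\<in>UNIV. a i) + 1))}"

definition cone :: "'n expv \<Rightarrow> 'n set \<Rightarrow> 'n expv set" where
  "cone v S = {c. (\<forall>i\<in>S. c i = v i) \<and> (\<forall>i. i \<notin> S \<longrightarrow> v i \<le> c i)}"

end

theory Submission
  imports Defs Complex_Main "HOL-Library.FuncSet"
begin

lemma nat_seq_mono_sub:
  fixes s :: "nat \<Rightarrow> nat"
  shows "\<exists>h::nat\<Rightarrow>nat. strict_mono h \<and> mono (\<lambda>k. s (h k))"
proof -
  obtain f where f: "strict_mono f" "monoseq (\<lambda>n. s (f n))" using seq_monosub by blast
  show ?thesis
  proof (cases "\<forall>m. \<forall>n\<ge>m. s (f m) \<le> s (f n)")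
    case True
    then show ?thesis using f(1) unfolding mono_def by blast
  next
    case False
    then have dec: "\<forall>m. \<forall>n\<ge>m. s (f n) \<le> s (f m)" using f(2) unfolding monoseq_def by blast
    obtain n0 where n0: "\<forall>y. s (f n0) \<le> s (f y)"
      using ex_has_least_nat[of "\<lambda>_. True" 0 "\<lambda>n. s (f n)"] by blast
    have "strict_mono (\<lambda>k. f (k + n0))" using f(1) unfolding strict_mono_def by simp
    moreover have "mono (\<lambda>k. s (f (k + n0)))"
      unfolding mono_def
    proof (intro allI impI)
      fix x y :: nat assume "x \<le> y"
      have "s (f (x + n0)) \<le> s (f n0)" using dec by simp
      also have "\<dots> \<le> s (f (y + n0))" using n0 by simp
      finally show "s (f (x + n0)) \<le> s (f (y + n0))" .
    qed
    ultimately show ?thesis by blast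
  qed
qed

lemma vec_seq_mono_sub:
  fixes f :: "nat \<Rightarrow> ('n \<Rightarrow> nat)"
  assumes "finite J"
  shows "\<exists>h::nat\<Rightarrow>nat. strict_mono h \<and> (\<forall>i\<in>J. mono (\<lambda>k. f (h k) i))"
  using assms
proof (induction J rule: finite_induct)
  case empty
  have "strict_mono (id::nat\<Rightarrow>nat)" by (simp add: strict_mono_def)
  then show ?case by blast
next
  case (insert j J)
  then obtain h :: "nat \<Rightarrow> nat" where h: "strict_mono h" "\<forall>i\<in>J. mono (\<lambda>k. f (h k) i)" by blast
  obtain g :: "nat \<Rightarrow> nat" where g: "strict_mono g" "mono (\<lambda>k. f (h (g k)) j)"
    using nat_seq_mono_sub[of "\<lambda>k. f (h k) j"] by blast
  have "strict_mono (h \<circ> g)" using h(1) g(1) by (simp add: strict_mono_def)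
  moreover have "\<forall>i\<in>insert j J. mono (\<lambda>k. f ((h \<circ> g) k) i)"
  proof
    fix i assume "i \<in> insert j J"
    then show "mono (\<lambda>k. f ((h \<circ> g) k) i)"
    proof
      assume "i = j" then show ?thesis using g(2) by simp
    next
      assume "i \<in> J"
      then have m: "mono (\<lambda>k. f (h k) i)" using h(2) by blast
      have mg: "mono g" using g(1) by (rule strict_mono_mono)
      show ?thesis
      proof (rule monoI)
        fix x y :: nat assume "x \<le> y"
        then have "g x \<le> g y" using mg by (rule monoD[rotated])
        then show "f ((h \<circ> g) x) i \<le> f ((h \<circ> g) y) i" using monoD[OF m] by simp
      qed
    qed
  qed
  ultimately show ?case by blast
qed

lemma dickson_seq:
  fixes f :: "nat \<Rightarrow> ('n::finite \<Rightarrow> nat)"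
  shows "\<exists>i j. i < j \<and> f i \<le> f j"
proof -
  obtain h :: "nat \<Rightarrow> nat" where h: "strict_mono h" "\<forall>i\<in>UNIV. mono (\<lambda>k. f (h k) i)"
    using vec_seq_mono_sub[OF finite_UNIV, of f] by blast
  have "h 0 < h 1" using h(1) by (simp add: strict_mono_def)
  moreover have "f (h 0) \<le> f (h 1)"
  proof (rule le_funI)
    fix i
    have "mono (\<lambda>k. f (h k) i)" using h(2) by blast
    then show "f (h 0) i \<le> f (h 1) i" by (rule monoD) simp
  qed
  ultimately show ?thesis by blast
qed

lemma mingens_finite:
  fixes U :: "('n::finite \<Rightarrow> nat) set"
  shows "finite (mingens U)"
proof (rule ccontr)
  assume "infinite (mingens U)"
  then obtain f :: "nat \<Rightarrow> _" where f: "inj f" "range f \<subseteq> mingens U"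
    using infinite_countable_subset by blast
  obtain i j where ij: "i < j" "f i \<le> f j" using dickson_seq by blast
  have fi: "f i \<in> mingens U" and fj: "f j \<in> mingens U" using f(2) by auto
  have "f i \<in> U" using fi unfolding mingens_def by simp
  then have "f i = f j" using fj ij(2) unfolding mingens_def by simp
  then show False using f(1) ij(1) by (simp add: inj_eq)
qed

lemma sum_le_eq:
  fixes a b :: "'n::finite \<Rightarrow> nat"
  assumes "b \<le> a" "(\<Sum>i\<in>UNIV. a i) \<le> (\<Sum>i\<in>UNIV. b i)"
  shows "b = a"
proof -
  have le: "\<forall>i\<in>UNIV. b i \<le> a i" using assms(1) by (simp add: le_fun_def)
  show ?thesis
  proof (rule ccontr)
    assume "b \<noteq> a"
    then obtain i where "b i \<noteq> a i" by (auto simp: fun_eq_iff)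
    then have "b i < a i" using le by (simp add: le_neq_implies_less)
    then have "(\<Sum>i\<in>UNIV. b i) < (\<Sum>i\<in>UNIV. a i)"
      using sum_strict_mono_ex1[OF finite_UNIV le] by blast
    then show False using assms(2) by simp
  qed
qed

lemma below_mingens:
  fixes U :: "('n::finite \<Rightarrow> nat) set"
  assumes "a \<in> U"
  shows "\<exists>m\<in>mingens U. m \<le> a"
proof -
  obtain b where b: "b \<in> U \<and> b \<le> a" "\<forall>y. y \<in> U \<and> y \<le> a \<longrightarrow> (\<Sum>i\<in>UNIV. b i) \<le> (\<Sum>i\<in>UNIV. y i)"
    using ex_has_least_nat[of "\<lambda>y. y \<in> U \<and> y \<le> a" a "\<lambda>y. \<Sum>i\<in>UNIV. y i"] assms by blast
  have "b \<in> mingens U"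
    unfolding mingens_def
  proof (safe)
    show "b \<in> U" using b by blast
  next
    fix y assume "y \<in> U" "y \<le> b"
    then have "y \<le> a" using b(1) by (meson order_trans)
    then have "(\<Sum>i\<in>UNIV. b i) \<le> (\<Sum>i\<in>UNIV. y i)" using b(2) \<open>y \<in> U\<close> by simp
    then show "y = b" by (rule sum_le_eq[OF \<open>y \<le> b\<close>])
  qed
  then show ?thesis using b by blast
qed

definition trunc :: "nat \<Rightarrow> ('n \<Rightarrow> nat) \<Rightarrow> ('n \<Rightarrow> nat)" where
  "trunc N a = (\<lambda>i. min (a i) N)"

lemma up_trunc:
  fixes U :: "('n::finite \<Rightarrow> nat) set"
  assumes up: "\<forall>a\<in>U. \<forall>b. a \<le> b \<longrightarrow> b \<in> U"
  shows "\<exists>N. \<forall>N'\<ge>N. \<forall>a b. trunc N' a = trunc N' b \<longrightarrow> (a \<in> U \<longleftrightarrow> b \<in> U)"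
proof -
  define N where "N = Max ((\<lambda>p. fst p (snd p)) ` (mingens U \<times> UNIV) \<union> {0})"
  have "finite (mingens U \<times> (UNIV::'n set))"
    using mingens_finite[of U] by (rule finite_cartesian_product) simp
  then have fin: "finite ((\<lambda>p. fst p (snd p)) ` (mingens U \<times> UNIV) \<union> {0})" by simp
  have key: "trunc N' a \<in> U" if aU: "a \<in> U" and NN: "N' \<ge> N" for a N'
  proof -
    obtain m where m: "m \<in> mingens U" "m \<le> a" using below_mingens[OF aU] by blast
    have "m i \<le> N" for i
    proof -
      have "(m, i) \<in> mingens U \<times> UNIV" using m(1) by simp
      then have "m i \<in> (\<lambda>p. fst p (snd p)) ` (mingens U \<times> UNIV)"
        by (rule rev_image_eqI) simp
      then show ?thesis unfolding N_def using fin by (intro Max_ge) auto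
    qed
    then have "m \<le> trunc N' a" unfolding trunc_def
    proof (intro le_funI)
      fix i assume mN: "\<And>i. m i \<le> N"
      have "m i \<le> a i" using m(2) by (rule le_funD)
      moreover have "m i \<le> N'" using mN[of i] NN by simp
      ultimately show "m i \<le> min (a i) N'" by simp
    qed
    moreover have "m \<in> U" using m(1) unfolding mingens_def by simp
    ultimately show ?thesis using up by blast
  qed
  have tle: "trunc N' a \<le> a" for N' a unfolding trunc_def le_fun_def by simp
  show ?thesis
  proof (intro exI[of _ N] allI impI)
    fix N' and a b :: "'n \<Rightarrow> nat" assume "N \<le> N'" "trunc N' a = trunc N' b"
    show "(a \<in> U) = (b \<in> U)"
    proof
      assume "a \<in> U"
      then have "trunc N' b \<in> U" using key[of a N'] \<open>N \<le> N'\<close> \<open>trunc N' a = trunc N' b\<close> by simp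
      then show "b \<in> U" using up tle[of N' b] by blast
    next
      assume "b \<in> U"
      then have "trunc N' a \<in> U" using key[of b N'] \<open>N \<le> N'\<close> \<open>trunc N' a = trunc N' b\<close> by simp
      then show "a \<in> U" using up tle[of N' a] by blast
    qed
  qed
qed


lemma up_from_step:
  fixes S :: "('n::finite \<Rightarrow> nat) set"
  assumes step: "\<And>a k. a \<in> S \<Longrightarrow> a(k := Suc (a k)) \<in> S"
  shows "a \<in> S \<Longrightarrow> a \<le> b \<Longrightarrow> b \<in> S"
proof (induction "\<Sum>i\<in>UNIV. b i - a i" arbitrary: a rule: nat_less_induct)
  case 1
  show ?case
  proof (cases "a = b")
    case True then show ?thesis using 1 by simp
  next
    case False
    then obtain k where k: "a k \<noteq> b k" by (auto simp: fun_eq_iff)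
    then have kl: "a k < b k" using 1(3) by (simp add: le_fun_def le_neq_implies_less)
    define a' where "a' = a(k := Suc (a k))"
    have a'S: "a' \<in> S" using step 1(2) a'_def by simp
    have a'b: "a' \<le> b" using 1(3) kl unfolding a'_def le_fun_def by simp
    have eq: "(\<lambda>i. b i - a i) = (\<lambda>i. (b i - a' i) + (if i = k then 1 else 0))"
      using kl by (auto simp: a'_def fun_eq_iff)
    have "(\<Sum>i\<in>UNIV. b i - a i) = (\<Sum>i\<in>UNIV. b i - a' i) + 1"
      by (subst eq) (simp add: sum.distrib)
    then show ?thesis using 1(1) a'S a'b by auto
  qed
qed

lemma mpow_up: "a \<in> mpow I l \<Longrightarrow> a \<le> b \<Longrightarrow> b \<in> mpow I l"
  by (cases l) (auto simp: mprod_def mgen_def intro: order_trans)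

lemma mpow_mult: "x \<in> mpow I l \<Longrightarrow> y \<in> I \<Longrightarrow> (\<lambda>i. y i + x i) \<in> mpow I (Suc l)"
  by (auto simp: mprod_def mgen_def)

lemma xpow_le: "b \<le> xpow k d \<Longrightarrow> b = xpow k (b k)"
  by (auto simp: le_fun_def xpow_def fun_eq_iff split: if_splits)

lemma dexp_in:
  assumes "m_primary I"
  shows "xpow k (dexp I k) \<in> I"
proof -
  obtain d where d: "xpow k d \<in> I" using assms unfolding m_primary_def by blast
  define d0 where "d0 = (LEAST d. xpow k d \<in> I)"
  have in0: "xpow k d0 \<in> I" unfolding d0_def using d by (rule LeastI)
  have mg: "xpow k d0 \<in> mingens I"
    unfolding mingens_def
  proof (safe)
    show "xpow k d0 \<in> I" by (rule in0)
  next
    fix b assume b: "b \<in> I" "b \<le> xpow k d0"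
    have be: "b = xpow k (b k)" using b(2) by (rule xpow_le)
    then have h1: "d0 \<le> b k" unfolding d0_def using b(1) by (metis Least_le)
    have "b k \<le> xpow k d0 k" using b(2) by (simp add: le_fun_def)
    then have "b k \<le> d0" by (simp add: xpow_def)
    then show "b = xpow k d0" using be h1 by simp
  qed
  have uniq: "d' = d0" if "xpow k d' \<in> mingens I" for d'
  proof -
    have "xpow k d' \<in> I" using that unfolding mingens_def by blast
    then have "d0 \<le> d'" unfolding d0_def by (rule Least_le)
    then have "xpow k d0 \<le> xpow k d'" by (simp add: le_fun_def xpow_def)
    then have "xpow k d0 = xpow k d'" using that in0 unfolding mingens_def by blast
    then have "xpow k d0 k = xpow k d' k" by simp
    then show ?thesis by (simp add: xpow_def)
  qed
  have "dexp I k = d0" unfolding dexp_def using mg uniq by (rule the_equality)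
  then show ?thesis using in0 by simp
qed

lemma mingens_char:
  fixes U :: "('n \<Rightarrow> nat) set"
  assumes up: "\<And>a b. a \<in> U \<Longrightarrow> a \<le> b \<Longrightarrow> b \<in> U"
  shows "m \<in> mingens U \<longleftrightarrow> m \<in> U \<and> (\<forall>i. 0 < m i \<longrightarrow> m(i := m i - 1) \<notin> U)"
proof
  assume m: "m \<in> mingens U"
  show "m \<in> U \<and> (\<forall>i. 0 < m i \<longrightarrow> m(i := m i - 1) \<notin> U)"
  proof (intro conjI allI impI)
    show "m \<in> U" using m unfolding mingens_def by blast
  next
    fix i assume "0 < m i"
    show "m(i := m i - 1) \<notin> U"
    proof
      assume "m(i := m i - 1) \<in> U"
      moreover have "m(i := m i - 1) \<le> m" by (simp add: le_fun_def)
      ultimately have "m(i := m i - 1) = m" using m unfolding mingens_def by blast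
      then have "(m(i := m i - 1)) i = m i" by simp
      then show False using \<open>0 < m i\<close> by simp
    qed
  qed
next
  assume m: "m \<in> U \<and> (\<forall>i. 0 < m i \<longrightarrow> m(i := m i - 1) \<notin> U)"
  show "m \<in> mingens U"
    unfolding mingens_def
  proof (safe)
    show "m \<in> U" using m by blast
  next
    fix b assume b: "b \<in> U" "b \<le> m"
    show "b = m"
    proof (rule ccontr)
      assume "b \<noteq> m"
      then obtain i where "b i \<noteq> m i" by (auto simp: fun_eq_iff)
      then have "b i < m i" using b(2) by (simp add: le_fun_def le_neq_implies_less)
      then have "b \<le> m(i := m i - 1)" using b(2) by (simp add: le_fun_def)
      then have "m(i := m i - 1) \<in> U" using up b(1) by blast
      then show False using m \<open>b i < m i\<close> by simp
    qed
  qed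
qed

lemma finite_bounded_funs:
  "finite {c :: 'n::finite \<Rightarrow> nat. \<forall>i. c i \<le> B i}"
proof -
  have "{c :: 'n \<Rightarrow> nat. \<forall>i. c i \<le> B i} = PiE UNIV (\<lambda>i. {..B i})"
    by (auto simp: PiE_UNIV_domain Pi_def)
  then show ?thesis by (simp add: finite_PiE)
qed

lemma sum_upd_Suc:
  fixes a :: "'n::finite \<Rightarrow> nat"
  shows "(\<Sum>i\<in>UNIV. (a(k := Suc (a k))) i) = Suc (\<Sum>i\<in>UNIV. a i)"
proof -
  have eq: "a(k := Suc (a k)) = (\<lambda>i. a i + (if i = k then 1 else 0))" by (auto simp: fun_eq_iff)
  show ?thesis by (subst eq) (simp add: sum.distrib)
qed

theorem mainTheorem8:
  fixes I :: "('n::finite) expv set"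
  assumes "good_ideal I"
  shows "\<exists>F. finite F \<and> (\<forall>C\<in>F. \<exists>v S. C = cone v S) \<and> pairwise disjnt F \<and> \<Union>F = UNIV
            \<and> (\<forall>C\<in>F. \<forall>a\<in>C. \<forall>b\<in>C. I_idx I a = I_idx I b)"
proof -
  have mp: "m_primary I" using assms unfolding good_ideal_def by blast
  define d where "d = dexp I"
  define pt where "pt = (\<lambda>(c::'n \<Rightarrow> nat) (a::'n \<Rightarrow> nat) i. c i + a i * d i)"
  define lv where "lv = (\<lambda>a::'n \<Rightarrow> nat. (\<Sum>i\<in>UNIV. a i) + 1)"
  define Q1 where "Q1 = (\<lambda>c. {a. pt c a \<in> mpow I (lv a)})"
  define Q2 where "Q2 = (\<lambda>c i. {a. 0 < pt c a i \<and> (pt c a)(i := pt c a i - 1) \<in> mpow I (lv a)})"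
  define W where "W = {c :: 'n \<Rightarrow> nat. \<forall>i. c i \<le> d i}"
  define Gen where "Gen = (\<lambda>a. {c. pt c a \<in> box I a \<inter> mingens (mpow I (lv a))})"
  have dI: "xpow k (d k) \<in> I" for k unfolding d_def using mp by (rule dexp_in)
  have lv_step: "lv (a(k := Suc (a k))) = Suc (lv a)" for a k
    unfolding lv_def sum_upd_Suc by simp
  have pt_step: "pt c (a(k := Suc (a k))) = (\<lambda>i. xpow k (d k) i + pt c a i)" for c a k
    by (auto simp: pt_def xpow_def fun_eq_iff)
  have Iidx: "I_idx I a = mgen (Gen a)" for a
  proof -
    have "{(\<lambda>i. m i - a i * dexp I i) | m. m \<in> box I a \<inter> mingens (mpow I ((\<Sum>i\<in>UNIV. a i) + 1))} = Gen a"
    proof (intro set_eqI iffI)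
      fix c assume "c \<in> {(\<lambda>i. m i - a i * dexp I i) | m. m \<in> box I a \<inter> mingens (mpow I ((\<Sum>i\<in>UNIV. a i) + 1))}"
      then obtain m where m: "c = (\<lambda>i. m i - a i * dexp I i)" "m \<in> box I a \<inter> mingens (mpow I ((\<Sum>i\<in>UNIV. a i) + 1))" by blast
      have "pt c a = m" using m(2) unfolding m(1) pt_def d_def box_def by (auto simp: fun_eq_iff)
      then show "c \<in> Gen a" using m(2) unfolding Gen_def lv_def by simp
    next
      fix c assume c: "c \<in> Gen a"
      have "c = (\<lambda>i. pt c a i - a i * dexp I i)" by (simp add: pt_def d_def)
      then show "c \<in> {(\<lambda>i. m i - a i * dexp I i) | m. m \<in> box I a \<inter> mingens (mpow I ((\<Sum>i\<in>UNIV. a i) + 1))}"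
        using c unfolding Gen_def lv_def by blast
    qed
    then show ?thesis unfolding I_idx_def by simp
  qed
  have Gen_char: "c \<in> Gen a \<longleftrightarrow> c \<in> W \<and> a \<in> Q1 c \<and> (\<forall>i. a \<notin> Q2 c i)" for a c
  proof -
    have "pt c a \<in> box I a \<longleftrightarrow> c \<in> W"
      unfolding box_def W_def pt_def d_def by (auto simp: algebra_simps)
    moreover have "pt c a \<in> mingens (mpow I (lv a)) \<longleftrightarrow> a \<in> Q1 c \<and> (\<forall>i. a \<notin> Q2 c i)"
      unfolding Q1_def Q2_def using mingens_char[of "mpow I (lv a)" "pt c a"] mpow_up by blast
    ultimately show ?thesis unfolding Gen_def by blast
  qed
  have Q1_up: "a \<in> Q1 c \<Longrightarrow> a \<le> b \<Longrightarrow> b \<in> Q1 c" for a b c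
  proof (rule up_from_step)
    fix a k assume "a \<in> Q1 c"
    then have "pt c a \<in> mpow I (lv a)" unfolding Q1_def by simp
    then have "(\<lambda>i. xpow k (d k) i + pt c a i) \<in> mpow I (Suc (lv a))" using dI by (rule mpow_mult)
    then show "a(k := Suc (a k)) \<in> Q1 c"
      unfolding Q1_def mem_Collect_eq pt_step lv_step .
  qed
  have Q2_up: "a \<in> Q2 c j \<Longrightarrow> a \<le> b \<Longrightarrow> b \<in> Q2 c j" for a b c j
  proof (rule up_from_step)
    fix a k assume a: "a \<in> Q2 c j"
    then have pos: "0 < pt c a j" unfolding Q2_def by blast
    have eq: "(pt c (a(k := Suc (a k))))(j := pt c (a(k := Suc (a k))) j - 1)
        = (\<lambda>i. xpow k (d k) i + ((pt c a)(j := pt c a j - 1)) i)"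
      using pos unfolding pt_step by (auto simp: fun_eq_iff xpow_def)
    have "0 < pt c (a(k := Suc (a k))) j" using pos unfolding pt_step by simp
    then show "a(k := Suc (a k)) \<in> Q2 c j"
      using a unfolding Q2_def by (simp only: mem_Collect_eq eq lv_step) (blast intro: mpow_mult dI)
  qed
  define Fam where "Fam = (Q1 ` W) \<union> ((\<lambda>(c, i). Q2 c i) ` (W \<times> UNIV))"
  have finW: "finite W" unfolding W_def by (rule finite_bounded_funs)
  have finFam: "finite Fam" unfolding Fam_def using finW by simp
  have "\<forall>U\<in>Fam. \<exists>N. \<forall>N'\<ge>N. \<forall>a b. trunc N' a = trunc N' b \<longrightarrow> (a \<in> U \<longleftrightarrow> b \<in> U)"
  proof
    fix U assume "U \<in> Fam"
    then have "(\<exists>c. U = Q1 c) \<or> (\<exists>c j. U = Q2 c j)" unfolding Fam_def by auto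
    then consider c where "U = Q1 c" | c j where "U = Q2 c j" by blast
    then have "\<forall>a\<in>U. \<forall>b. a \<le> b \<longrightarrow> b \<in> U"
    proof cases
      case 1 then show ?thesis using Q1_up by blast
    next
      case 2 then show ?thesis using Q2_up by blast
    qed
    then show "\<exists>N. \<forall>N'\<ge>N. \<forall>a b. trunc N' a = trunc N' b \<longrightarrow> (a \<in> U \<longleftrightarrow> b \<in> U)" by (rule up_trunc)
  qed
  from bchoice[OF this] obtain Nf where Nf: "\<forall>U\<in>Fam. \<forall>N'\<ge>Nf U. \<forall>a b. trunc N' a = trunc N' b \<longrightarrow> (a \<in> U \<longleftrightarrow> b \<in> U)"
    by blast
  define N where "N = Max (Nf ` Fam \<union> {0})"
  have NU: "\<forall>U\<in>Fam. \<forall>a b. trunc N a = trunc N b \<longrightarrow> (a \<in> U \<longleftrightarrow> b \<in> U)"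
  proof (intro ballI allI impI)
    fix U :: "('n \<Rightarrow> nat) set" and a b :: "'n \<Rightarrow> nat"
    assume U: "U \<in> Fam" and t: "trunc N a = trunc N b"
    have "Nf U \<le> N" unfolding N_def using finFam U by (intro Max_ge) auto
    then show "(a \<in> U) = (b \<in> U)" using Nf U t by blast
  qed
  have const: "I_idx I a = I_idx I b" if t: "trunc N a = trunc N b" for a b
  proof -
    have "Gen a = Gen b"
    proof (intro set_eqI)
      fix c
      show "c \<in> Gen a \<longleftrightarrow> c \<in> Gen b"
      proof (cases "c \<in> W")
        case True
        have F1: "Q1 c \<in> Fam" unfolding Fam_def using True by (intro UnI1 imageI)
        have F2: "Q2 c i \<in> Fam" for i
        proof -
          have "(c, i) \<in> W \<times> UNIV" using True by simp
          then have "(\<lambda>(c, i). Q2 c i) (c, i) \<in> (\<lambda>(c, i). Q2 c i) ` (W \<times> UNIV)" by (rule imageI)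
          then show ?thesis unfolding Fam_def by simp
        qed
        have e1: "a \<in> Q1 c \<longleftrightarrow> b \<in> Q1 c" using NU F1 t by blast
        have e2: "a \<in> Q2 c i \<longleftrightarrow> b \<in> Q2 c i" for i using NU F2[of i] t by blast
        show ?thesis unfolding Gen_char using e1 e2 by simp
      next
        case False
        then show ?thesis unfolding Gen_char by simp
      qed
    qed
    then show ?thesis unfolding Iidx by simp
  qed
  define T where "T = {t :: 'n \<Rightarrow> nat. \<forall>i. t i \<le> (\<lambda>_. N) i}"
  have finT: "finite T" unfolding T_def by (rule finite_bounded_funs)
  have cone_eq: "cone t {i. t i < N} = {c. trunc N c = t}" if "t \<in> T" for t
  proof -
    have tN: "\<forall>i. t i \<le> N" using that unfolding T_def by simp
    show ?thesis
    proof (intro set_eqI iffI)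
      fix c assume "c \<in> cone t {i. t i < N}"
      then have c: "\<forall>i. t i < N \<longrightarrow> c i = t i" "\<forall>i. \<not> t i < N \<longrightarrow> t i \<le> c i"
        unfolding cone_def by simp_all
      have "min (c i) N = t i" for i
      proof (cases "t i < N")
        case True then show ?thesis using c(1) by simp
      next
        case False
        then have "t i = N" using tN by (simp add: le_antisym not_less)
        moreover have "N \<le> c i" using c(2) False \<open>t i = N\<close> by auto
        ultimately show ?thesis by (simp add: min_def)
      qed
      then show "c \<in> {c. trunc N c = t}" by (simp add: trunc_def fun_eq_iff)
    next
      fix c assume "c \<in> {c. trunc N c = t}"
      then have c: "\<forall>i. min (c i) N = t i" by (simp add: trunc_def fun_eq_iff)
      have "t i \<le> c i" for i using c[rule_format, of i] min.cobounded1[of "c i" N] by simp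
      moreover have "c i = t i" if "t i < N" for i using c[rule_format, of i] that
        by (simp add: min_def split: if_splits)
      ultimately show "c \<in> cone t {i. t i < N}" unfolding cone_def by blast
    qed
  qed
  have truncT: "trunc N c \<in> T" for c unfolding T_def trunc_def by simp
  define F where "F = (\<lambda>t. cone t {i. t i < N}) ` T"
  show ?thesis
  proof (intro exI[of _ F] conjI)
    show "finite F" unfolding F_def using finT by simp
    show "\<forall>C\<in>F. \<exists>v S. C = cone v S" unfolding F_def by blast
    show "pairwise disjnt F"
    proof (rule pairwiseI)
      fix X Y assume X: "X \<in> F" and Y: "Y \<in> F" and XY: "X \<noteq> Y"
      obtain t where t: "t \<in> T" "X = cone t {i. t i < N}" using X unfolding F_def by blast
      obtain t' where t': "t' \<in> T" "Y = cone t' {i. t' i < N}" using Y unfolding F_def by blast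
      have X': "X = {c. trunc N c = t}" using t cone_eq by simp
      have Y': "Y = {c. trunc N c = t'}" using t' cone_eq by simp
      have "t \<noteq> t'" using XY X' Y' by blast
      then show "disjnt X Y" unfolding disjnt_def X' Y' by blast
    qed
    show "\<Union>F = UNIV"
    proof (rule set_eqI)
      fix c :: "'n \<Rightarrow> nat"
      have "c \<in> cone (trunc N c) {i. trunc N c i < N}" using cone_eq[OF truncT[of c]] by simp
      moreover have "cone (trunc N c) {i. trunc N c i < N} \<in> F" unfolding F_def using truncT by (rule imageI)
      ultimately show "c \<in> \<Union>F \<longleftrightarrow> c \<in> UNIV" by blast
    qed
    show "\<forall>C\<in>F. \<forall>a\<in>C. \<forall>b\<in>C. I_idx I a = I_idx I b"
    proof (intro ballI)
      fix C a b assume C: "C \<in> F" and a: "a \<in> C" and b: "b \<in> C"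
      obtain t where t: "t \<in> T" "C = cone t {i. t i < N}" using C unfolding F_def by blast
      have "C = {c. trunc N c = t}" using t cone_eq by simp
      then have "trunc N a = trunc N b" using a b by simp
      then show "I_idx I a = I_idx I b" by (rule const)
    qed
  qed
qed


end
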